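(* Let $\psi\in C^1(\mathbb{R})$ satisfy: $\psi(0)=1$, $\psi$ is even, there exist $C>0$ and $\delta>1$ with $|\psi(x)|+|x\psi'(x)|\leq C\langle x\rangle^{-\delta}$ for all $x\in\mathbb{R}$, and $A_\psi:=\int_{\mathbb{R}}\psi(x)\,\mathrm{d}x\neq 0$. Let $h(x)=\psi(x)+x\psi'(x)$ and $C_h=\int_{\mathbb{R}}|h(x)|^2\,\mathrm{d}x$. Let $\mu$ be a probability measure on $\mathbb{R}$ and $(c,d)$ a bounded interval. Then $$\lim_{a\downarrow0}a\int_c^d|W_h(\mu)(b,a)|^2\,\mathrm{d}b=C_h\Big(\sum_{x\in(c,d)}\mu(\{x\})^2+\tfrac12\big(\mu(\{c\})^2+\mu(\{d\})^2\big)\Big).$$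
   Context: $\langle x\rangle=(1+x^2)^{1/2}$. The continuous wavelet transform of $\mu$ is $W_h(\mu)(b,a)=\frac1a\int_{-\infty}^{\infty}h((b-y)/a)\,\mathrm{d}\mu(y)$ for $b\in\mathbb{R}$, $a>0$. *)

theory Defs
  imports "HOL-Probability.Probability"
begin

definition jbracket :: "real \<Rightarrow> real" where
  "jbracket x = sqrt (1 + x\<^sup>2)"

definition wavelet_transform :: "(real \<Rightarrow> real) \<Rightarrow> real measure \<Rightarrow> real \<Rightarrow> real \<Rightarrow> real" where
  "wavelet_transform h M b a = (1 / a) * (\<integral>y. h ((b - y) / a) \<partial>M)"

end

theory Submission
  imports Defs "HOL-Real_Asymp.Real_Asymp"
begin


locale wsetup = prob_space M for M :: "real measure" +
  fixes hh :: "real \<Rightarrow> real" and c d B :: real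
  assumes sets_M: "sets M = sets borel" and cd: "c < d"
    and hh_cont: "continuous_on UNIV hh"
    and hh_bound: "\<And>x. \<bar>hh x\<bar> \<le> B"
    and hh_int: "integrable lborel hh"
    and hh_even: "\<And>x. hh (- x) = hh x"
    and hh_lim: "(hh \<longlongrightarrow> 0) at_infinity"
begin

lemma hh_meas[measurable]: "hh \<in> borel_measurable borel"
  using hh_cont by (rule borel_measurable_continuous_onI)

lemma B_nonneg: "0 \<le> B" using hh_bound[of 0] by linarith

lemma hh2_int: "integrable lborel (\<lambda>x. (hh x)\<^sup>2)"
proof -
  have i: "integrable lborel (\<lambda>x. B * \<bar>hh x\<bar>)" using hh_int by simp
  have b: "norm ((hh x)\<^sup>2) \<le> norm (B * \<bar>hh x\<bar>)" for x
  proof -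
    have "\<bar>hh x\<bar> * \<bar>hh x\<bar> \<le> B * \<bar>hh x\<bar>" by (rule mult_right_mono[OF hh_bound abs_ge_zero])
    then show ?thesis using B_nonneg by (simp add: power2_eq_square abs_mult)
  qed
  show ?thesis by (rule Bochner_Integration.integrable_bound[OF i]) (use b in auto)
qed

lemma sets_MM: "sets (M \<Otimes>\<^sub>M M) = sets (borel \<Otimes>\<^sub>M borel :: (real \<times> real) measure)"
  using sets_pair_measure_cong[OF sets_M sets_M] by metis

lemma meas_MM: "(f::real\<times>real\<Rightarrow>real) \<in> borel_measurable (borel \<Otimes>\<^sub>M borel) \<Longrightarrow> f \<in> borel_measurable (M \<Otimes>\<^sub>M M)"
  apply (subst measurable_cong_sets[OF sets_MM refl])
  apply assumption
  done

lemma sets_MML: "sets ((M \<Otimes>\<^sub>M M) \<Otimes>\<^sub>M lborel) = sets ((borel \<Otimes>\<^sub>M borel) \<Otimes>\<^sub>M borel :: ((real \<times> real) \<times> real) measure)"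
  using sets_pair_measure_cong[OF sets_MM sets_lborel] by metis

lemma meas_MML: "(f::(real\<times>real)\<times>real\<Rightarrow>real) \<in> borel_measurable ((borel \<Otimes>\<^sub>M borel) \<Otimes>\<^sub>M borel) \<Longrightarrow> f \<in> borel_measurable ((M \<Otimes>\<^sub>M M) \<Otimes>\<^sub>M lborel)"
  apply (subst measurable_cong_sets[OF sets_MML refl])
  apply assumption
  done

lemma meas_M: "f \<in> borel_measurable borel \<Longrightarrow> f \<in> borel_measurable M"
  using measurable_cong_sets[OF sets_M refl] by blast

sublocale MM: pair_prob_space M M ..

interpretation MML: pair_sigma_finite "M \<Otimes>\<^sub>M M" lborel
  by (intro pair_sigma_finite.intro MM.P.sigma_finite_measure_axioms lborel.sigma_finite_measure_axioms)

lemma sq_int: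
  fixes g :: "real \<Rightarrow> real"
  assumes [measurable]: "g \<in> borel_measurable borel" and bd: "\<And>x. \<bar>g x\<bar> \<le> D"
  shows "(\<integral>y. g y \<partial>M)\<^sup>2 = (\<integral>p. g (fst p) * g (snd p) \<partial>(M \<Otimes>\<^sub>M M))"
proof -
  have gM: "integrable M g"
    by (rule integrable_const_bound[where B=D]) (use bd meas_M[OF assms(1)] in auto)
  have "integrable (M \<Otimes>\<^sub>M M) (\<lambda>p. g (fst p) * g (snd p))"
  proof (rule MM.P.integrable_const_bound[where B="D*D"])
    show "AE x in M \<Otimes>\<^sub>M M. norm (g (fst x) * g (snd x)) \<le> D * D"
      using bd by (auto simp: abs_mult intro!: mult_mono order.trans[OF abs_ge_zero bd])
    show "(\<lambda>p. g (fst p) * g (snd p)) \<in> borel_measurable (M \<Otimes>\<^sub>M M)"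
      by (rule meas_MM) measurable
  qed
  from MM.integral_fst'[OF this]
  have "(\<integral>p. g (fst p) * g (snd p) \<partial>(M \<Otimes>\<^sub>M M)) = (\<integral>x. (\<integral>y. g x * g y \<partial>M) \<partial>M)"
    by simp
  also have "\<dots> = (\<integral>y. g y \<partial>M)\<^sup>2" by (simp add: power2_eq_square)
  finally show ?thesis ..
qed

definition K :: "real \<Rightarrow> real \<Rightarrow> real \<Rightarrow> real" where
  "K t y z = (\<integral>u. indicator {c<..<d} (y + u / t) * (hh u * hh (u + t * (y - z))) \<partial>lborel)"

lemma rewrite_F:
  assumes t: "t > 0"
  shows "inverse t * (LINT b:{c<..<d}|lborel. (wavelet_transform hh M b (inverse t))\<^sup>2)
     = (\<integral>p. K t (fst p) (snd p) \<partial>(M \<Otimes>\<^sub>M M))"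
proof -
  define G where "G b p = t * indicator {c<..<d} b * (hh ((b - fst p) * t) * hh ((b - snd p) * t))" for b p
  have wt: "(wavelet_transform hh M b (inverse t))\<^sup>2 = t\<^sup>2 * (\<integral>p. hh ((b - fst p) * t) * hh ((b - snd p) * t) \<partial>(M \<Otimes>\<^sub>M M))" for b
  proof -
    have "(wavelet_transform hh M b (inverse t))\<^sup>2 = t\<^sup>2 * (\<integral>y. hh ((b - y) * t) \<partial>M)\<^sup>2"
      unfolding wavelet_transform_def using t by (simp add: power_mult_distrib divide_inverse)
    also have "(\<integral>y. hh ((b - y) * t) \<partial>M)\<^sup>2 = (\<integral>p. hh ((b - fst p) * t) * hh ((b - snd p) * t) \<partial>(M \<Otimes>\<^sub>M M))"
      by (rule sq_int[where D=B]) (auto intro: hh_bound)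
    finally show ?thesis .
  qed
  have "inverse t * (LINT b:{c<..<d}|lborel. (wavelet_transform hh M b (inverse t))\<^sup>2)
      = (\<integral>b. (\<integral>p. G b p \<partial>(M \<Otimes>\<^sub>M M)) \<partial>lborel)"
    unfolding set_lebesgue_integral_def
    apply (subst integral_mult_right_zero[symmetric])
    apply (rule Bochner_Integration.integral_cong[OF refl])
    apply (subst wt)
    using t by (simp add: G_def[abs_def] power2_eq_square)
  also have "\<dots> = (\<integral>p. (\<integral>b. G b p \<partial>lborel) \<partial>(M \<Otimes>\<^sub>M M))"
  proof (rule MML.Fubini_integral)
    have "integrable ((M \<Otimes>\<^sub>M M) \<Otimes>\<^sub>M lborel) (\<lambda>q. t * B\<^sup>2 * indicator (space (M \<Otimes>\<^sub>M M) \<times> {c<..<d}) q)"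
    proof (intro integrable_mult_right integrable_real_indicator)
      show "space (M \<Otimes>\<^sub>M M) \<times> {c<..<d} \<in> sets ((M \<Otimes>\<^sub>M M) \<Otimes>\<^sub>M lborel)"
        by (intro pair_measureI) auto
      show "emeasure ((M \<Otimes>\<^sub>M M) \<Otimes>\<^sub>M lborel) (space (M \<Otimes>\<^sub>M M) \<times> {c<..<d}) < \<infinity>"
        using cd by (simp add: lborel.emeasure_pair_measure_Times MM.P.emeasure_space_1 ennreal_mult_less_top)
    qed
    then show "integrable ((M \<Otimes>\<^sub>M M) \<Otimes>\<^sub>M lborel) (\<lambda>(p, b). G b p)"
    proof (rule Bochner_Integration.integrable_bound)
      show "(\<lambda>(p, b). G b p) \<in> borel_measurable ((M \<Otimes>\<^sub>M M) \<Otimes>\<^sub>M lborel)"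
        unfolding G_def by (rule meas_MML) measurable
      show "AE q in (M \<Otimes>\<^sub>M M) \<Otimes>\<^sub>M lborel. norm ((\<lambda>(p, b). G b p) q) \<le> norm (t * B\<^sup>2 * indicator (space (M \<Otimes>\<^sub>M M) \<times> {c<..<d}) q)"
      proof (rule AE_I2, clarify)
        fix y z b
        have "\<bar>hh ((b - y) * t) * hh ((b - z) * t)\<bar> \<le> B * B"
          unfolding abs_mult by (intro mult_mono hh_bound) (auto simp: B_nonneg)
        then show "norm (G b (y, z)) \<le> norm (t * B\<^sup>2 * indicator (space (M \<Otimes>\<^sub>M M) \<times> {c<..<d}) ((y, z), b))"
          unfolding G_def using t B_nonneg
          by (auto simp: indicator_def abs_mult power2_eq_square space_pair_measure sets_M cong: sets_eq_imp_space_eq)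
      qed
    qed
  qed
  also have "\<dots> = (\<integral>p. K t (fst p) (snd p) \<partial>(M \<Otimes>\<^sub>M M))"
  proof (rule Bochner_Integration.integral_cong[OF refl])
    fix p :: "real \<times> real"
    obtain y z where p: "p = (y, z)" by (cases p)
    have "(\<integral>b. G b p \<partial>lborel) = \<bar>1/t\<bar> *\<^sub>R (\<integral>u. G (y + 1/t * u) p \<partial>lborel)"
      using t by (intro lborel_integral_real_affine) simp
    also have "\<dots> = K t y z"
    proof -
      have e: "G (y + 1/t * u) p = t * (indicator {c<..<d} (y + u/t) * (hh u * hh (u + t*(y-z))))" for u
      proof -
        have 1: "(y + 1/t*u - y)*t = u" and 2: "(y + 1/t*u - z)*t = u + t*(y-z)"
          using t by (simp_all add: field_simps)
        show ?thesis unfolding G_def p fst_conv snd_conv 1 2 by (simp add: mult_ac)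
      qed
      show ?thesis unfolding e K_def using t by simp
    qed
    finally show "(\<integral>b. G b p \<partial>lborel) = K t (fst p) (snd p)" by (simp add: p)
  qed
  finally show ?thesis .
qed

lemma prod_int:
  assumes [measurable]: "g \<in> borel_measurable borel" and g1: "\<And>u. \<bar>g u\<bar> \<le> 1"
  shows "integrable lborel (\<lambda>u. g u * (hh u * hh (u + s)))"
proof (rule Bochner_Integration.integrable_bound)
  show "integrable lborel (\<lambda>x. B * \<bar>hh x\<bar>)" using hh_int by simp
  show "(\<lambda>u. g u * (hh u * hh (u + s))) \<in> borel_measurable lborel" by measurable
  show "AE x in lborel. norm (g x * (hh x * hh (x + s))) \<le> norm (B * \<bar>hh x\<bar>)"
  proof (rule AE_I2)
    fix x
    have "\<bar>g x\<bar> * (\<bar>hh x\<bar> * \<bar>hh (x + s)\<bar>) \<le> 1 * (\<bar>hh x\<bar> * B)"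
      by (intro mult_mono g1 hh_bound mult_left_mono) auto
    then show "norm (g x * (hh x * hh (x + s))) \<le> norm (B * \<bar>hh x\<bar>)"
      using B_nonneg by (simp add: abs_mult mult_ac)
  qed
qed

lemma K_int: "integrable lborel (\<lambda>u. indicator {c<..<d} (y + u / t) * (hh u * hh (u + t * (y - z))))"
  by (rule prod_int) (auto simp: indicator_def)

definition L1 where "L1 = (\<integral>u. \<bar>hh u\<bar> \<partial>lborel)"

lemma K_bound: "\<bar>K t y z\<bar> \<le> B * L1"
proof -
  have "\<bar>K t y z\<bar> \<le> (\<integral>u. \<bar>indicator {c<..<d} (y + u / t) * (hh u * hh (u + t * (y - z)))\<bar> \<partial>lborel)"
    unfolding K_def by (rule integral_abs_bound)
  also have "\<dots> \<le> (\<integral>u. B * \<bar>hh u\<bar> \<partial>lborel)"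
  proof (rule integral_mono)
    show "integrable lborel (\<lambda>u. \<bar>indicator {c<..<d} (y + u / t) * (hh u * hh (u + t * (y - z)))\<bar>)"
      using K_int by (rule integrable_abs)
    show "integrable lborel (\<lambda>u. B * \<bar>hh u\<bar>)" using hh_int by simp
    fix u
    have "\<bar>indicator {c<..<d} (y + u / t) :: real\<bar> * (\<bar>hh u\<bar> * \<bar>hh (u + t * (y - z))\<bar>) \<le> 1 * (\<bar>hh u\<bar> * B)"
      by (intro mult_mono hh_bound mult_left_mono) (auto simp: indicator_def)
    then show "\<bar>indicator {c<..<d} (y + u / t) * (hh u * hh (u + t * (y - z)))\<bar> \<le> B * \<bar>hh u\<bar>"
      by (simp add: abs_mult mult_ac)
  qed
  also have "\<dots> = B * L1" by (simp add: L1_def)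
  finally show ?thesis .
qed

lemma K_meas: "(\<lambda>p. K t (fst p) (snd p)) \<in> borel_measurable (M \<Otimes>\<^sub>M M)"
  unfolding K_def
  by (rule lborel.borel_measurable_lebesgue_integral[where f="\<lambda>p u. indicator {c<..<d} (fst p + u / t) * (hh u * hh (u + t * (fst p - snd p)))", simplified])
     (rule meas_MML, measurable)

lemma lin_inf:
  assumes "s \<noteq> 0" shows "filterlim (\<lambda>t::real. u + t * s) at_infinity at_top"
proof (cases "s > 0")
  case True
  then have "filterlim (\<lambda>t::real. u + t * s) at_top at_top" by real_asymp
  then show ?thesis using filterlim_mono[OF _ at_top_le_at_infinity order.refl] by blast
next
  case False
  with assms have "s < 0" by simp
  then have "filterlim (\<lambda>t::real. u + t * s) at_bot at_top" by real_asymp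
  then show ?thesis using filterlim_mono[OF _ at_bot_le_at_infinity order.refl] by blast
qed

lemma K_off:
  assumes "y \<noteq> z" shows "((\<lambda>t. K t y z) \<longlongrightarrow> 0) at_top"
proof (rule Lim_null_comparison)
  define D where "D t = (\<integral>u. \<bar>hh u\<bar> * \<bar>hh (u + t * (y - z))\<bar> \<partial>lborel)" for t
  have Dint: "integrable lborel (\<lambda>u. \<bar>hh u\<bar> * \<bar>hh (u + t * (y - z))\<bar>)" for t
    using integrable_abs[OF prod_int[of "\<lambda>_. 1" "t * (y - z)"]] by (simp add: abs_mult)
  show "\<forall>\<^sub>F t in at_top. norm (K t y z) \<le> D t"
  proof (rule always_eventually, rule allI)
    fix t
    have "\<bar>K t y z\<bar> \<le> (\<integral>u. \<bar>indicator {c<..<d} (y + u / t) * (hh u * hh (u + t * (y - z)))\<bar> \<partial>lborel)"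
      unfolding K_def by (rule integral_abs_bound)
    also have "\<dots> \<le> D t" unfolding D_def
    proof (rule integral_mono[OF integrable_abs[OF K_int] Dint])
      fix u show "\<bar>indicator {c<..<d} (y + u / t) * (hh u * hh (u + t * (y - z)))\<bar> \<le> \<bar>hh u\<bar> * \<bar>hh (u + t * (y - z))\<bar>"
        by (auto simp: indicator_def abs_mult)
    qed
    finally show "norm (K t y z) \<le> D t" by simp
  qed
  have p1: "(\<lambda>u::real. 0::real) \<in> borel_measurable lborel" by simp
  have p2: "\<And>t. (\<lambda>u. \<bar>hh u\<bar> * \<bar>hh (u + t * (y - z))\<bar>) \<in> borel_measurable lborel" by measurable
  have p3: "integrable lborel (\<lambda>u. B * \<bar>hh u\<bar>)" using hh_int by simp
  have p4: "AE u in lborel. ((\<lambda>t. \<bar>hh u\<bar> * \<bar>hh (u + t * (y - z))\<bar>) \<longlongrightarrow> 0) at_top"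
  proof (rule AE_I2)
    fix u
    have "((\<lambda>t. hh (u + t * (y - z))) \<longlongrightarrow> 0) at_top"
      using filterlim_compose[OF hh_lim lin_inf[of "y - z" u]] assms by simp
    then have "((\<lambda>t. \<bar>hh u\<bar> * \<bar>hh (u + t * (y - z))\<bar>) \<longlongrightarrow> \<bar>hh u\<bar> * \<bar>0\<bar>) at_top"
      by (intro tendsto_intros)
    then show "((\<lambda>t. \<bar>hh u\<bar> * \<bar>hh (u + t * (y - z))\<bar>) \<longlongrightarrow> 0) at_top" by simp
  qed
  have p5: "\<forall>\<^sub>F t in at_top. AE u in lborel. norm (\<bar>hh u\<bar> * \<bar>hh (u + t * (y - z))\<bar>) \<le> B * \<bar>hh u\<bar>"
    by (intro always_eventually allI AE_I2) (simp add: abs_mult, metis mult.commute mult_left_mono hh_bound abs_ge_zero)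
  show "(D \<longlongrightarrow> 0) at_top"
    using integral_dominated_convergence_at_top[OF p1 p2 p3 p4 p5] by (simp add: D_def[abs_def])
qed

lemma K_diag_gen:
  assumes ev: "\<And>u. eventually (\<lambda>t. indicator {c<..<d} (y + u/t) = e u) at_top"
    and [measurable]: "e \<in> borel_measurable borel" and e1: "\<And>u. \<bar>e u\<bar> \<le> 1"
  shows "((\<lambda>t. K t y y) \<longlongrightarrow> (\<integral>u. e u * (hh u * hh u) \<partial>lborel)) at_top"
proof -
  have p1: "(\<lambda>u::real. e u * (hh u * hh u)) \<in> borel_measurable lborel" by measurable
  have p2: "\<And>t. (\<lambda>u::real. indicator {c<..<d} (y + u/t) * (hh u * hh u) :: real) \<in> borel_measurable lborel" by measurable
  have p3: "integrable lborel (\<lambda>u. B * \<bar>hh u\<bar>)" using hh_int by simp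
  have p4: "AE u in lborel. ((\<lambda>t. indicator {c<..<d} (y + u/t) * (hh u * hh u) :: real) \<longlongrightarrow> e u * (hh u * hh u)) at_top"
  proof (rule AE_I2)
    fix u :: real
    have "((\<lambda>t. indicator {c<..<d} (y + u/t) :: real) \<longlongrightarrow> e u) at_top"
      by (rule tendsto_eventually[OF ev])
    then show "((\<lambda>t. indicator {c<..<d} (y + u/t) * (hh u * hh u) :: real) \<longlongrightarrow> e u * (hh u * hh u)) at_top"
      by (intro tendsto_intros)
  qed
  have p5: "\<forall>\<^sub>F t in at_top. AE u in lborel. norm (indicator {c<..<d} (y + u/t) * (hh u * hh u) :: real) \<le> B * \<bar>hh u\<bar>"
  proof (intro always_eventually allI AE_I2)
    fix t u
    have "\<bar>indicator {c<..<d} (y + u / t) :: real\<bar> * (\<bar>hh u\<bar> * \<bar>hh u\<bar>) \<le> 1 * (\<bar>hh u\<bar> * B)"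
      by (intro mult_mono hh_bound mult_left_mono) (auto simp: indicator_def)
    then show "norm (indicator {c<..<d} (y + u/t) * (hh u * hh u) :: real) \<le> B * \<bar>hh u\<bar>"
      by (simp add: abs_mult mult_ac)
  qed
  show ?thesis
    using integral_dominated_convergence_at_top[OF p1 p2 p3 p4 p5] by (simp add: K_def)
qed

definition CH where "CH = (\<integral>u. (hh u)\<^sup>2 \<partial>lborel)"

lemma half_pos: "(\<integral>u. indicator {0<..} u * (hh u * hh u) \<partial>lborel) = CH / 2"
  and half_neg: "(\<integral>u. indicator {..<0} u * (hh u * hh u) \<partial>lborel) = CH / 2"
proof -
  have ip: "integrable lborel (\<lambda>u. indicator {0<..} u * (hh u * hh u) :: real)"
    using prod_int[of "indicator {0<..}" 0] by (simp add: indicator_def)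
  have im: "integrable lborel (\<lambda>u. indicator {..<0} u * (hh u * hh u) :: real)"
    using prod_int[of "indicator {..<0}" 0] by (simp add: indicator_def)
  have sym: "(\<integral>u. indicator {..<0} u * (hh u * hh u) \<partial>lborel) = (\<integral>u. indicator {0<..} u * (hh u * hh u) \<partial>lborel)"
    using lborel_integral_real_affine[of "-1" "\<lambda>u. indicator {..<0} u * (hh u * hh u) :: real" 0]
    by (simp add: hh_even indicator_def)
  have "CH = (\<integral>u. indicator {0<..} u * (hh u * hh u) + indicator {..<0} u * (hh u * hh u) \<partial>lborel)"
    unfolding CH_def
  proof (rule integral_cong_AE)
    show "AE u in lborel. (hh u)\<^sup>2 = indicator {0<..} u * (hh u * hh u) + indicator {..<0} u * (hh u * hh u)"
      using AE_lborel_singleton[of 0] by eventually_elim (auto simp: indicator_def power2_eq_square)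
  qed measurable
  also have "\<dots> = (\<integral>u. indicator {0<..} u * (hh u * hh u) \<partial>lborel) + (\<integral>u. indicator {..<0} u * (hh u * hh u) \<partial>lborel)"
    by (rule Bochner_Integration.integral_add[OF ip im])
  finally have "CH = 2 * (\<integral>u. indicator {0<..} u * (hh u * hh u) \<partial>lborel)" using sym by simp
  then show "(\<integral>u. indicator {0<..} u * (hh u * hh u) \<partial>lborel) = CH / 2" by simp
  then show "(\<integral>u. indicator {..<0} u * (hh u * hh u) \<partial>lborel) = CH / 2" using sym by simp
qed

definition wt :: "real \<Rightarrow> real" where
  "wt y = (if y \<in> {c<..<d} then 1 else if y = c \<or> y = d then 1/2 else 0)"

lemma lim_yu: "((\<lambda>t::real. y + u / t) \<longlongrightarrow> y) at_top"
  by real_asymp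

lemma K_diag: "((\<lambda>t. K t y y) \<longlongrightarrow> CH * wt y) at_top"
proof -
  have tpos: "eventually (\<lambda>t::real. t > 0) at_top" by (rule eventually_gt_at_top)
  consider "y \<in> {c<..<d}" | "y < c" | "y > d" | "y = c" | "y = d" by force
  then show ?thesis
  proof cases
    case 1
    have "((\<lambda>t. K t y y) \<longlongrightarrow> (\<integral>u. 1 * (hh u * hh u) \<partial>lborel)) at_top"
    proof (rule K_diag_gen)
      fix u
      have "eventually (\<lambda>t. c < y + u/t) at_top" using order_tendstoD(1)[OF lim_yu] 1 by simp
      moreover have "eventually (\<lambda>t. y + u/t < d) at_top" using order_tendstoD(2)[OF lim_yu] 1 by simp
      ultimately show "eventually (\<lambda>t. indicator {c<..<d} (y + u/t) = (1::real)) at_top"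
        by eventually_elim (auto simp: indicator_def)
    qed auto
    then show ?thesis using 1 by (simp add: wt_def CH_def power2_eq_square)
  next
    case 2
    have "((\<lambda>t. K t y y) \<longlongrightarrow> (\<integral>u. 0 * (hh u * hh u) \<partial>lborel)) at_top"
    proof (rule K_diag_gen)
      fix u
      have "eventually (\<lambda>t. y + u/t < c) at_top" using order_tendstoD(2)[OF lim_yu] 2 by simp
      then show "eventually (\<lambda>t. indicator {c<..<d} (y + u/t) = (0::real)) at_top"
        by eventually_elim (auto simp: indicator_def)
    qed auto
    then show ?thesis using 2 cd by (simp add: wt_def)
  next
    case 3
    have "((\<lambda>t. K t y y) \<longlongrightarrow> (\<integral>u. 0 * (hh u * hh u) \<partial>lborel)) at_top"
    proof (rule K_diag_gen)
      fix u
      have "eventually (\<lambda>t. d < y + u/t) at_top" using order_tendstoD(1)[OF lim_yu] 3 by simp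
      then show "eventually (\<lambda>t. indicator {c<..<d} (y + u/t) = (0::real)) at_top"
        by eventually_elim (auto simp: indicator_def)
    qed auto
    then show ?thesis using 3 cd by (simp add: wt_def)
  next
    case 4
    have "((\<lambda>t. K t y y) \<longlongrightarrow> (\<integral>u. indicator {0<..} u * (hh u * hh u) \<partial>lborel)) at_top"
    proof (rule K_diag_gen)
      fix u :: real
      show "eventually (\<lambda>t. indicator {c<..<d} (y + u/t) = (indicator {0<..} u :: real)) at_top"
      proof (cases "u > 0")
        case True
        have "eventually (\<lambda>t. y + u/t < d) at_top" using order_tendstoD(2)[OF lim_yu] 4 cd by simp
        with tpos show ?thesis
          by eventually_elim (use True 4 in \<open>auto simp: indicator_def\<close>)
      next
        case False
        from tpos show ?thesis
        proof eventually_elim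
          case (elim t)
          have "u / t \<le> 0" using False elim by (simp add: divide_nonpos_pos)
          then show ?case using False 4 by (auto simp: indicator_def)
        qed
      qed
    qed (auto simp: indicator_def)
    then show ?thesis using 4 cd by (simp add: wt_def half_pos)
  next
    case 5
    have "((\<lambda>t. K t y y) \<longlongrightarrow> (\<integral>u. indicator {..<0} u * (hh u * hh u) \<partial>lborel)) at_top"
    proof (rule K_diag_gen)
      fix u :: real
      show "eventually (\<lambda>t. indicator {c<..<d} (y + u/t) = (indicator {..<0} u :: real)) at_top"
      proof (cases "u < 0")
        case True
        have "eventually (\<lambda>t. c < y + u/t) at_top" using order_tendstoD(1)[OF lim_yu] 5 cd by simp
        with tpos show ?thesis
          by eventually_elim (use True 5 in \<open>auto simp: indicator_def divide_neg_pos\<close>)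
      next
        case False
        from tpos show ?thesis
        proof eventually_elim
          case (elim t)
          have "u / t \<ge> 0" using False elim by simp
          then show ?case using False 5 by (auto simp: indicator_def)
        qed
      qed
    qed (auto simp: indicator_def)
    then show ?thesis using 5 cd by (simp add: wt_def half_neg)
  qed
qed

lemma space_M: "space M = UNIV"
  using sets_eq_imp_space_eq[OF sets_M] by simp

lemma m_meas[measurable]: "(\<lambda>y. measure M {y}) \<in> borel_measurable M"
proof -
  have D: "{p \<in> space (borel \<Otimes>\<^sub>M borel). fst p = (snd p :: real)} \<in> sets (borel \<Otimes>\<^sub>M borel)"
    by measurable
  have D': "{p. fst p = (snd p :: real)} \<in> sets (M \<Otimes>\<^sub>M M)"
    using D unfolding sets_MM by (simp add: space_pair_measure)
  have "(\<lambda>y. emeasure M (Pair y -` {p. fst p = snd p})) \<in> borel_measurable M"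
    by (rule MM.measurable_emeasure_Pair1[OF D'])
  moreover have "\<And>y. Pair y -` {p. fst p = snd p} = {y}" by auto
  ultimately have "(\<lambda>y. emeasure M {y}) \<in> borel_measurable M" by simp
  then show ?thesis unfolding measure_def by measurable
qed

lemma m_bound: "0 \<le> measure M {y}" "measure M {y} \<le> 1"
  by (auto simp: prob_le_1)

lemma atom_sum:
  assumes S[measurable]: "S \<in> sets borel"
  shows "(\<integral>y. indicator S y * measure M {y} \<partial>M) = (\<Sum>\<^sub>\<infinity>x\<in>S. (measure M {x})\<^sup>2)"
proof -
  define m where "m y = measure M {y}" for y
  define A where "A = {x \<in> S. m x \<noteq> 0}"
  have Acount: "countable A"
    by (rule countable_subset[OF _ countable_support]) (auto simp: A_def m_def)
  have SM[measurable]: "S \<in> sets M" using S sets_M by simp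
  have sing[measurable]: "{x} \<in> sets M" for x using sets_M by simp
  have mm[measurable]: "m \<in> borel_measurable M" unfolding m_def[abs_def] by (rule m_meas)
  have m0: "0 \<le> m y" for y by (simp add: m_def)
  have int1: "integrable M (\<lambda>y. indicator S y * m y)"
    by (rule integrable_const_bound[where B=1]) (auto simp: m_def indicator_def prob_le_1)
  have "(\<integral>\<^sup>+y. ennreal (indicator S y * m y) \<partial>M) = (\<integral>\<^sup>+y. (\<integral>\<^sup>+x. ennreal (m x) * indicator {x} y \<partial>count_space A) \<partial>M)"
  proof (rule nn_integral_cong)
    fix y
    show "ennreal (indicator S y * m y) = (\<integral>\<^sup>+x. ennreal (m x) * indicator {x} y \<partial>count_space A)"
    proof (cases "y \<in> A")
      case True
      have "(\<integral>\<^sup>+x. ennreal (m x) * indicator {x} y \<partial>count_space A) = (\<integral>\<^sup>+x. ennreal (m x) * indicator {y} x \<partial>count_space A)"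
        by (rule nn_integral_cong) (auto simp: indicator_def)
      also have "\<dots> = ennreal (m y)" using True by simp
      finally show ?thesis using True by (simp add: A_def)
    next
      case False
      have "(\<integral>\<^sup>+x. ennreal (m x) * indicator {x} y \<partial>count_space A) = (\<integral>\<^sup>+x. 0 \<partial>count_space A)"
        by (rule nn_integral_cong) (use False in \<open>auto simp: indicator_def\<close>)
      then show ?thesis using False by (auto simp: A_def indicator_def)
    qed
  qed
  also have "\<dots> = (\<integral>\<^sup>+x. (\<integral>\<^sup>+y. ennreal (m x) * indicator {x} y \<partial>M) \<partial>count_space A)"
    by (rule nn_integral_count_space_nn_integral[OF Acount]) measurable
  also have "\<dots> = (\<integral>\<^sup>+x. ennreal ((m x)\<^sup>2) \<partial>count_space A)"
  proof (rule nn_integral_cong)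
    fix x
    have "(\<integral>\<^sup>+y. ennreal (m x) * indicator {x} y \<partial>M) = ennreal (m x) * emeasure M {x}"
      by (simp add: nn_integral_cmult)
    also have "\<dots> = ennreal ((m x)\<^sup>2)"
      by (simp add: emeasure_eq_measure m_def power2_eq_square ennreal_mult m0)
    finally show "(\<integral>\<^sup>+y. ennreal (m x) * indicator {x} y \<partial>M) = ennreal ((m x)\<^sup>2)" .
  qed
  finally have eq: "(\<integral>\<^sup>+x. ennreal ((m x)\<^sup>2) \<partial>count_space A) = ennreal (\<integral>y. indicator S y * m y \<partial>M)"
    using nn_integral_eq_integral[OF int1] m0 by (simp add: indicator_def)
  have I0: "0 \<le> (\<integral>y. indicator S y * m y \<partial>M)"
    by (rule Bochner_Integration.integral_nonneg) (auto simp: m0 indicator_def)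
  have abss0: "integrable (count_space A) (\<lambda>x. (m x)\<^sup>2)"
    unfolding integrable_iff_bounded using eq by simp
  have abss: "Infinite_Set_Sum.abs_summable_on (\<lambda>x. (m x)\<^sup>2) A"
    using abss0 by (simp add: Infinite_Set_Sum.abs_summable_on_def)
  have "(\<integral>y. indicator S y * m y \<partial>M) = infsetsum (\<lambda>x. (m x)\<^sup>2) A"
  proof -
    have "0 \<le> infsetsum (\<lambda>x. (m x)\<^sup>2) A" by (rule infsetsum_nonneg) simp
    then show ?thesis using nn_integral_conv_infsetsum[OF abss] eq I0 by (simp add: ennreal_inj)
  qed
  also have "\<dots> = infsum (\<lambda>x. (m x)\<^sup>2) A" by (rule infsetsum_infsum[OF abss])
  also have "\<dots> = infsum (\<lambda>x. (m x)\<^sup>2) S"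
    by (rule infsum_cong_neutral) (auto simp: A_def)
  finally show ?thesis by (simp add: m_def)
qed

definition LIMf :: "real \<times> real \<Rightarrow> real" where
  "LIMf p = (if fst p = snd p then CH * wt (fst p) else 0)"

lemma LIMf_meas[measurable]: "LIMf \<in> borel_measurable (M \<Otimes>\<^sub>M M)"
  by (rule meas_MM) (unfold LIMf_def wt_def, measurable)

lemma LIMf_int: "integrable (M \<Otimes>\<^sub>M M) LIMf"
  by (rule MM.P.integrable_const_bound[where B="\<bar>CH\<bar>"]) (auto simp: LIMf_def wt_def abs_mult)

lemma main_lim: "((\<lambda>t. \<integral>p. K t (fst p) (snd p) \<partial>(M \<Otimes>\<^sub>M M)) \<longlongrightarrow> (\<integral>p. LIMf p \<partial>(M \<Otimes>\<^sub>M M))) at_top"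
proof -
  have p3: "integrable (M \<Otimes>\<^sub>M M) (\<lambda>_. B * L1)" by simp
  have p4: "AE p in M \<Otimes>\<^sub>M M. ((\<lambda>t. K t (fst p) (snd p)) \<longlongrightarrow> LIMf p) at_top"
  proof (rule AE_I2)
    fix p :: "real \<times> real"
    show "((\<lambda>t. K t (fst p) (snd p)) \<longlongrightarrow> LIMf p) at_top"
    proof (cases "fst p = snd p")
      case True
      then show ?thesis using K_diag[of "fst p"] by (simp add: LIMf_def)
    next
      case False
      then show ?thesis using K_off[OF False] by (simp add: LIMf_def)
    qed
  qed
  have p5: "\<forall>\<^sub>F t in at_top. AE p in M \<Otimes>\<^sub>M M. norm (K t (fst p) (snd p)) \<le> B * L1"
    using K_bound by simp
  show ?thesis
    by (rule integral_dominated_convergence_at_top[OF LIMf_meas K_meas p3 p4 p5])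
qed

lemma LIMf_val: "(\<integral>p. LIMf p \<partial>(M \<Otimes>\<^sub>M M)) =
   CH * ((\<Sum>\<^sub>\<infinity>x\<in>{c<..<d}. (measure M {x})\<^sup>2) + 1/2 * ((measure M {c})\<^sup>2 + (measure M {d})\<^sup>2))"
proof -
  define m where "m y = measure M {y}" for y
  have mm[measurable]: "m \<in> borel_measurable M" unfolding m_def[abs_def] by (rule m_meas)
  have sing[measurable]: "{x} \<in> sets M" for x using sets_M by simp
  have SM[measurable]: "{c<..<d} \<in> sets M" using sets_M by simp
  have "(\<integral>p. LIMf p \<partial>(M \<Otimes>\<^sub>M M)) = (\<integral>y. (\<integral>z. LIMf (y, z) \<partial>M) \<partial>M)"
    by (rule MM.integral_fst'[OF LIMf_int, symmetric])
  also have "\<dots> = (\<integral>y. CH * (wt y * m y) \<partial>M)"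
  proof (rule Bochner_Integration.integral_cong[OF refl])
    fix y
    have "(\<integral>z. LIMf (y, z) \<partial>M) = (\<integral>z. (CH * wt y) * indicator {y} z \<partial>M)"
      by (rule Bochner_Integration.integral_cong) (auto simp: LIMf_def indicator_def)
    also have "\<dots> = CH * (wt y * m y)" by (simp add: m_def space_M)
    finally show "(\<integral>z. LIMf (y, z) \<partial>M) = CH * (wt y * m y)" .
  qed
  also have "\<dots> = CH * (\<integral>y. wt y * m y \<partial>M)" by simp
  also have "(\<integral>y. wt y * m y \<partial>M) = (\<integral>y. indicator {c<..<d} y * m y + ((1/2 * m c) * indicator {c} y + (1/2 * m d) * indicator {d} y) \<partial>M)"
    by (rule Bochner_Integration.integral_cong) (use cd in \<open>auto simp: wt_def indicator_def\<close>)
  also have "\<dots> = (\<integral>y. indicator {c<..<d} y * m y \<partial>M) + (\<integral>y. (1/2 * m c) * indicator {c} y + (1/2 * m d) * indicator {d} y \<partial>M)"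
  proof (rule Bochner_Integration.integral_add)
    show "integrable M (\<lambda>y. indicator {c<..<d} y * m y)"
    proof (rule integrable_const_bound[where B=1])
      show "AE x in M. norm (indicator {c<..<d} x * m x) \<le> 1"
        by (auto simp: m_def indicator_def prob_le_1)
    qed measurable
    show "integrable M (\<lambda>y. (1/2 * m c) * indicator {c} y + (1/2 * m d) * indicator {d} y)"
      by (rule integrable_const_bound[where B="\<bar>1/2 * m c\<bar> + \<bar>1/2 * m d\<bar>"]) (auto simp: indicator_def)
  qed
  also have "(\<integral>y. (1/2 * m c) * indicator {c} y + (1/2 * m d) * indicator {d} y \<partial>M) = 1/2 * ((m c)\<^sup>2 + (m d)\<^sup>2)"
  proof -
    have ic: "integrable M (\<lambda>y. (1/2 * m c) * indicator {c} y :: real)"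
      by (intro integrable_mult_right integrable_real_indicator) (auto simp: less_top[symmetric])
    have id: "integrable M (\<lambda>y. (1/2 * m d) * indicator {d} y :: real)"
      by (intro integrable_mult_right integrable_real_indicator) (auto simp: less_top[symmetric])
    show ?thesis
      by (subst Bochner_Integration.integral_add[OF ic id]) (simp add: m_def space_M power2_eq_square algebra_simps)
  qed
  also have "(\<integral>y. indicator {c<..<d} y * m y \<partial>M) = (\<Sum>\<^sub>\<infinity>x\<in>{c<..<d}. (measure M {x})\<^sup>2)"
    unfolding m_def by (rule atom_sum) simp
  finally show ?thesis by (simp add: m_def)
qed

lemma final_at_top:
  "((\<lambda>t. inverse t * (LINT b:{c<..<d}|lborel. (wavelet_transform hh M b (inverse t))\<^sup>2)) \<longlongrightarrow>
     (\<integral>x. \<bar>hh x\<bar>\<^sup>2 \<partial>lborel) * ((\<Sum>\<^sub>\<infinity>x\<in>{c<..<d}. (measure M {x})\<^sup>2) + 1/2 * ((measure M {c})\<^sup>2 + (measure M {d})\<^sup>2))) at_top"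
proof -
  have "((\<lambda>t. \<integral>p. K t (fst p) (snd p) \<partial>(M \<Otimes>\<^sub>M M)) \<longlongrightarrow>
     (\<integral>x. \<bar>hh x\<bar>\<^sup>2 \<partial>lborel) * ((\<Sum>\<^sub>\<infinity>x\<in>{c<..<d}. (measure M {x})\<^sup>2) + 1/2 * ((measure M {c})\<^sup>2 + (measure M {d})\<^sup>2))) at_top"
    using main_lim unfolding LIMf_val by (simp add: CH_def)
  moreover have "eventually (\<lambda>t. \<integral>p. K t (fst p) (snd p) \<partial>(M \<Otimes>\<^sub>M M) =
      inverse t * (LINT b:{c<..<d}|lborel. (wavelet_transform hh M b (inverse t))\<^sup>2)) at_top"
    using eventually_gt_at_top[of 0] by eventually_elim (simp add: rewrite_F)
  ultimately show ?thesis by (rule Lim_transform_eventually)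
qed

end



lemma jb_ge_abs: "\<bar>x\<bar> \<le> jbracket x"
  unfolding jbracket_def by (rule real_le_rsqrt) simp

lemma jb_ge_1: "1 \<le> jbracket x"
  unfolding jbracket_def by simp

lemma jb_pow_le1: "0 \<le> e \<Longrightarrow> jbracket x powr (- e) \<le> 1"
proof -
  assume e: "0 \<le> e"
  have "1 \<le> jbracket x powr e" by (rule ge_one_powr_ge_zero[OF jb_ge_1 e])
  then show ?thesis by (simp add: powr_minus_divide divide_le_eq)
qed

lemma jb_int:
  assumes dl: "\<delta> > 1"
  shows "integrable lborel (\<lambda>x. jbracket x powr (- \<delta>))"
proof -
  have pm: "(\<lambda>x. x powr (- \<delta>)) integrable_on {1..}"
    using has_integral_powr_to_inf[of "- \<delta>" 1] dl by (auto simp: integrable_on_def)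
  have "(\<lambda>x. x powr (- \<delta>)) absolutely_integrable_on {1..}"
    by (rule nonnegative_absolutely_integrable_1[OF pm]) simp
  then have i1: "integrable lborel (\<lambda>x. indicator {1..} x * x powr (- \<delta>))"
    unfolding set_integrable_def by (subst (asm) integrable_completion) (simp_all)
  have i2: "integrable lborel (\<lambda>x. indicator {1..} (-x) * (-x) powr (- \<delta>))"
    using lborel_integrable_real_affine[OF i1, of "-1" 0] by simp
  have i3: "integrable lborel (indicator {-1..1} :: real \<Rightarrow> real)"
    by (rule integrable_real_indicator) auto
  have i: "integrable lborel (\<lambda>x. indicator {1..} x * x powr (- \<delta>) + indicator {1..} (-x) * (-x) powr (- \<delta>) + indicator {-1..1} x)"
    using i1 i2 i3 by (intro Bochner_Integration.integrable_add)
  show ?thesis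
  proof (rule Bochner_Integration.integrable_bound[OF i])
    show "(\<lambda>x. jbracket x powr - \<delta>) \<in> borel_measurable lborel"
      unfolding jbracket_def by measurable
    show "AE x in lborel. norm (jbracket x powr - \<delta>) \<le> norm (indicator {1..} x * x powr (- \<delta>) + indicator {1..} (-x) * (-x) powr (- \<delta>) + indicator {-1..1} x)"
    proof (rule AE_I2)
      fix x :: real
      have nn: "0 \<le> indicator {1..} x * x powr (- \<delta>) + indicator {1..} (-x) * (-x) powr (- \<delta>) + (indicator {-1..1} x :: real)"
        by (auto simp: indicator_def)
      have "jbracket x powr - \<delta> \<le> indicator {1..} x * x powr (- \<delta>) + indicator {1..} (-x) * (-x) powr (- \<delta>) + indicator {-1..1} x"
      proof (cases "x \<ge> 1")
        case True
        then have "jbracket x powr - \<delta> \<le> x powr - \<delta>"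
          using jb_ge_abs[of x] dl by (intro powr_mono2') auto
        then show ?thesis using True by (auto simp: indicator_def)
      next
        case False
        show ?thesis
        proof (cases "x \<le> -1")
          case True
          then have "jbracket x powr - \<delta> \<le> (-x) powr - \<delta>"
            using jb_ge_abs[of x] dl by (intro powr_mono2') auto
          then show ?thesis using True by (auto simp: indicator_def)
        next
          case False2: False
          then show ?thesis using False jb_pow_le1[of \<delta> x] dl by (auto simp: indicator_def)
        qed
      qed
      moreover have "0 \<le> jbracket x powr - \<delta>" by simp
      ultimately show "norm (jbracket x powr - \<delta>) \<le> norm (indicator {1..} x * x powr (- \<delta>) + indicator {1..} (-x) * (-x) powr (- \<delta>) + indicator {-1..1} x :: real)"
        using nn by simp
    qed
  qed
qed

lemma deriv_odd:
  fixes \<psi> :: "real \<Rightarrow> real"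
  assumes diff: "\<And>x. \<psi> differentiable (at x)" and even: "\<And>x. \<psi> (- x) = \<psi> x"
  shows "deriv \<psi> (- x) = - deriv \<psi> x"
proof -
  have D: "\<And>y. (\<psi> has_real_derivative deriv \<psi> y) (at y)"
    using diff by (simp add: DERIV_deriv_iff_real_differentiable)
  have "((\<lambda>x. \<psi> (- x)) has_real_derivative deriv \<psi> (- x) * (- 1)) (at x)"
    by (rule DERIV_chain2[OF D]) (auto intro!: derivative_eq_intros)
  moreover have "(\<lambda>x. \<psi> (- x)) = \<psi>" using even by auto
  ultimately have "(\<psi> has_real_derivative - deriv \<psi> (- x)) (at x)" by simp
  from DERIV_unique[OF D this] show ?thesis by simp
qed

theorem theorem2p8:
  fixes \<psi> :: "real \<Rightarrow> real" and M :: "real measure" and c d :: real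
  assumes diff: "\<And>x. \<psi> differentiable (at x)"
    and cont_deriv: "continuous_on UNIV (deriv \<psi>)"
    and psi0: "\<psi> 0 = 1"
    and even: "\<And>x. \<psi> (- x) = \<psi> x"
    and decay: "\<exists>C>0. \<exists>\<delta>>1. \<forall>x. \<bar>\<psi> x\<bar> + \<bar>x * deriv \<psi> x\<bar> \<le> C * jbracket x powr (- \<delta>)"
    and A_nonzero: "(\<integral>x. \<psi> x \<partial>lborel) \<noteq> 0"
    and prob: "prob_space M"
    and sets_M: "sets M = sets borel"
    and cd: "c < d"
  shows "((\<lambda>a. a * (LINT b:{c<..<d}|lborel.
              (wavelet_transform (\<lambda>x. \<psi> x + x * deriv \<psi> x) M b a)\<^sup>2))
          \<longlongrightarrow> (\<integral>x. \<bar>\<psi> x + x * deriv \<psi> x\<bar>\<^sup>2 \<partial>lborel) *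
                ((\<Sum>\<^sub>\<infinity>x\<in>{c<..<d}. (measure M {x})\<^sup>2)
                 + 1/2 * ((measure M {c})\<^sup>2 + (measure M {d})\<^sup>2)))
         (at_right 0)"
proof -
  obtain C \<delta> where C: "C > 0" and dl: "\<delta> > 1"
    and bd: "\<And>x. \<bar>\<psi> x\<bar> + \<bar>x * deriv \<psi> x\<bar> \<le> C * jbracket x powr (- \<delta>)"
    using decay by blast
  define hh where "hh x = \<psi> x + x * deriv \<psi> x" for x
  have hb: "\<bar>hh x\<bar> \<le> C * jbracket x powr (- \<delta>)" for x
    using bd[of x] unfolding hh_def by linarith
  have hbC: "\<bar>hh x\<bar> \<le> C" for x
  proof -
    have "C * jbracket x powr (- \<delta>) \<le> C * 1"
      using jb_pow_le1[of \<delta> x] dl C by (intro mult_left_mono) auto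
    then show ?thesis using hb[of x] by simp
  qed
  have contpsi: "continuous_on UNIV \<psi>"
    using diff by (intro continuous_at_imp_continuous_on ballI differentiable_imp_continuous_within) auto
  have hcont: "continuous_on UNIV hh"
    unfolding hh_def[abs_def] using contpsi cont_deriv by (intro continuous_intros)
  have [measurable]: "hh \<in> borel_measurable borel" by (rule borel_measurable_continuous_onI[OF hcont])
  have hint: "integrable lborel hh"
  proof (rule Bochner_Integration.integrable_bound[OF integrable_mult_right[OF jb_int[OF dl]]])
    show "hh \<in> borel_measurable lborel" by simp
    show "AE x in lborel. norm (hh x) \<le> norm (C * jbracket x powr - \<delta>)"
      using hb C by (auto intro!: AE_I2 order.trans[OF _ abs_ge_self])
  qed
  have heven: "hh (- x) = hh x" for x
    unfolding hh_def using deriv_odd[OF diff even, of x] even[of x] by simp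
  have hlim: "(hh \<longlongrightarrow> 0) at_infinity"
  proof (rule Lim_null_comparison)
    have "filterlim (\<lambda>x::real. norm x) at_top at_infinity"
      by (rule filterlim_at_infinity_imp_norm_at_top[OF filterlim_ident])
    then have "((\<lambda>x::real. \<bar>x\<bar> powr (- \<delta>)) \<longlongrightarrow> 0) at_infinity"
      using dl by (intro tendsto_neg_powr) auto
    then show "((\<lambda>x. C * \<bar>x\<bar> powr (- \<delta>)) \<longlongrightarrow> 0) at_infinity"
      by (rule tendsto_mult_right_zero)
    have "eventually (\<lambda>x::real. 1 \<le> norm x) at_infinity"
      unfolding eventually_at_infinity by auto
    then show "eventually (\<lambda>x. norm (hh x) \<le> C * \<bar>x\<bar> powr (- \<delta>)) at_infinity"
    proof eventually_elim
      case (elim x)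
      have "jbracket x powr (- \<delta>) \<le> \<bar>x\<bar> powr (- \<delta>)"
        using jb_ge_abs[of x] dl elim by (intro powr_mono2') auto
      then show ?case using hb[of x] C by (smt (verit) mult_left_mono real_norm_def)
    qed
  qed
  interpret wsetup M hh c d C
    by (intro wsetup.intro prob wsetup_axioms.intro sets_M cd hcont hbC hint heven hlim)
  show ?thesis
    unfolding filterlim_at_right_to_top
    using final_at_top unfolding hh_def[abs_def] .
qed


end
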